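(* Let $\mathcal{H}$ and $\mathcal{K}$ be finite-dimensional complex Hilbert spaces and let $\Psi: B(\mathcal{H})\to B(\mathcal{K})$ be a Hermitian-preserving trace-preserving linear map. Then the following are equivalent: (1) $\Psi$ is semi-positive, i.e. there exists an invertible density matrix $\rho\in B(\mathcal{H})$ such that $\Psi(\rho)$ is an invertible density matrix; (2) there exists a positive semidefinite $\rho\in B(\mathcal{H})$ such that $\Psi(\rho)$ is positive definite.
   Context: $B(\mathcal{H})$ denotes all linear operators on $\mathcal{H}$; a density matrix is a positive semidefinite operator of trace one. A map is Hermitian-preserving if $\Psi(X^\dagger)=\Psi(X)^\dagger$ and trace-preserving if $\operatorname{Tr}\Psi(X)=\operatorname{Tr}X$. *)

theory Defs
  imports "HOL-Analysis.Analysis"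
begin

text \<open>Operators on a finite-dimensional complex Hilbert space of dimension CARD('n)
  are represented (in the standard orthonormal basis) as matrices complex^'n^'n.\<close>

definition adj :: "complex^'n^'m \<Rightarrow> complex^'m^'n" where
  "adj A = (\<chi> i j. cnj (A $ j $ i))"

definition cscale :: "complex \<Rightarrow> complex^'n^'m \<Rightarrow> complex^'n^'m" where
  "cscale c A = (\<chi> i j. c * A $ i $ j)"

definition complex_linear_map :: "(complex^'n^'n \<Rightarrow> complex^'m^'m) \<Rightarrow> bool" where
  "complex_linear_map \<Psi> \<longleftrightarrow>
     (\<forall>A B. \<Psi> (A + B) = \<Psi> A + \<Psi> B) \<and> (\<forall>c A. \<Psi> (cscale c A) = cscale c (\<Psi> A))"

definition hermitian_preserving :: "(complex^'n^'n \<Rightarrow> complex^'m^'m) \<Rightarrow> bool" where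
  "hermitian_preserving \<Psi> \<longleftrightarrow> (\<forall>X. \<Psi> (adj X) = adj (\<Psi> X))"

definition trace_preserving :: "(complex^'n^'n \<Rightarrow> complex^'m^'m) \<Rightarrow> bool" where
  "trace_preserving \<Psi> \<longleftrightarrow> (\<forall>X. trace (\<Psi> X) = trace X)"

text \<open>Quadratic form <x, A x> (inner product antilinear in the first argument).\<close>
definition qform :: "complex^'n^'n \<Rightarrow> complex^'n \<Rightarrow> complex" where
  "qform A x = (\<Sum>i\<in>UNIV. cnj (x $ i) * (A *v x) $ i)"

definition psd :: "complex^'n^'n \<Rightarrow> bool" where
  "psd A \<longleftrightarrow> A = adj A \<and> (\<forall>x. Im (qform A x) = 0 \<and> Re (qform A x) \<ge> 0)"

definition pos_def :: "complex^'n^'n \<Rightarrow> bool" where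
  "pos_def A \<longleftrightarrow> A = adj A \<and> (\<forall>x. x \<noteq> 0 \<longrightarrow> Im (qform A x) = 0 \<and> Re (qform A x) > 0)"

definition density_matrix :: "complex^'n^'n \<Rightarrow> bool" where
  "density_matrix A \<longleftrightarrow> psd A \<and> trace A = 1"

definition semi_positive :: "(complex^'n^'n \<Rightarrow> complex^'m^'m) \<Rightarrow> bool" where
  "semi_positive \<Psi> \<longleftrightarrow> (\<exists>\<rho>. density_matrix \<rho> \<and> invertible \<rho> \<and>
       density_matrix (\<Psi> \<rho>) \<and> invertible (\<Psi> \<rho>))"

end

theory Submission
  imports Defs
begin

lemma invertible_ker: fixes A :: "complex^'n^'n"
  shows "invertible A \<longleftrightarrow> (\<forall>x. A *v x = 0 \<longrightarrow> x = 0)"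
  by (simp add: invertible_left_inverse matrix_left_invertible_ker)

definition sesq :: "complex^'n^'n \<Rightarrow> complex^'n \<Rightarrow> complex^'n \<Rightarrow> complex" where
  "sesq A x y = (\<Sum>i\<in>UNIV. \<Sum>j\<in>UNIV. cnj (x $ i) * A $ i $ j * y $ j)"

lemma qform_sesq: "qform A x = sesq A x x"
  by (simp add: qform_def sesq_def matrix_vector_mult_def sum_distrib_left mult.assoc)

lemma sesq_add_left: "sesq A (x + y) z = sesq A x z + sesq A y z"
  by (simp add: sesq_def algebra_simps sum.distrib)
lemma sesq_add_right: "sesq A x (y + z) = sesq A x y + sesq A x z"
  by (simp add: sesq_def algebra_simps sum.distrib)
lemma sesq_scale_left: "sesq A (c *s x) z = cnj c * sesq A x z"
  by (simp add: sesq_def algebra_simps sum_distrib_left)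
lemma sesq_scale_right: "sesq A x (c *s z) = c * sesq A x z"
  by (simp add: sesq_def algebra_simps sum_distrib_left)
lemma sesq_add_mat: "sesq (A + B) x y = sesq A x y + sesq B x y"
  by (simp add: sesq_def algebra_simps sum.distrib)
lemma sesq_cscale: "sesq (cscale c A) x y = c * sesq A x y"
  by (simp add: sesq_def cscale_def algebra_simps sum_distrib_left)
lemma sesq_adj: "sesq (adj A) x y = cnj (sesq A y x)"
  unfolding sesq_def adj_def
  by (subst sum.swap) (simp add: mult.commute mult.left_commute)

lemma sesq_axis: "sesq A (axis k c) x = cnj c * (A *v x) $ k"
proof -
  have "\<And>i j. cnj ((axis k c)$i) * A$i$j * x$j = (if i = k then cnj c * A$k$j * x$j else 0)"
    by (simp add: axis_def)
  then have "\<And>i. (\<Sum>j\<in>UNIV. cnj ((axis k c)$i) * A$i$j * x$j) = (if i = k then (\<Sum>j\<in>UNIV. cnj c * A$k$j * x$j) else 0)"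
    by simp
  then show ?thesis
    by (simp add: sesq_def matrix_vector_mult_def sum_distrib_left mult.assoc)
qed

lemma sesq_zero[simp]: "sesq A 0 y = 0" "sesq A x 0 = 0"
  by (simp_all add: sesq_def)

lemma herm_im: "A = adj A \<Longrightarrow> Im (qform A x) = 0"
  by (metis qform_sesq sesq_adj cnj.sel(2) complex_cnj_cancel_iff complex_eq_cancel_iff2 Im_complex_of_real
     Reals_cnj_iff complex_is_Real_iff)

lemma qform_add: "qform (A + B) x = qform A x + qform B x"
  by (simp add: qform_sesq sesq_add_mat)
lemma qform_cscale: "qform (cscale c A) x = c * qform A x"
  by (simp add: qform_sesq sesq_cscale)
lemma qform_expand: "qform A (x + c *s y) = qform A x + cnj c * sesq A y x + c * sesq A x y + cnj c * c * qform A y"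
  by (simp add: qform_sesq sesq_add_left sesq_add_right sesq_scale_left sesq_scale_right algebra_simps)

lemma quad_zero: fixes a q :: real
  assumes "\<forall>t. 0 \<le> 2*t*a + t^2*q" "q \<ge> 0" shows "a = 0"
proof -
  define t where "t = -a/(q+1)"
  have qp: "q + 1 > 0" using assms(2) by linarith
  have tq: "t*(q+1) = -a" unfolding t_def using qp by simp
  have "(2*t*a + t^2*q) * (q+1)^2 = 2*a*(t*(q+1))*(q+1) + (t*(q+1))^2*q"
    by (simp add: algebra_simps power2_eq_square)
  also have "\<dots> = -(a^2*(q+2))" unfolding tq by (simp add: algebra_simps power2_eq_square)
  finally have e: "(2*t*a + t^2*q) * (q+1)^2 = -(a^2*(q+2))" .
  have "0 \<le> 2*t*a + t^2*q" using assms(1) by blast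
  then have "0 \<le> (2*t*a + t^2*q) * (q+1)^2" by simp
  then have "a^2 * (q + 2) \<le> 0" using e by linarith
  then have "a^2 \<le> 0" using assms(2)
    by (simp add: mult_le_0_iff)
  then show ?thesis by simp
qed

lemma psd_kernel:
  assumes "psd A" "Re (qform A x) = 0" shows "A *v x = 0"
proof -
  have H: "A = adj A" using assms(1) psd_def by blast
  have sym: "sesq A x y = cnj (sesq A y x)" for y
    by (metis H sesq_adj)
  have "Im (qform A x) = 0" using assms(1) unfolding psd_def by blast
  then have q0: "qform A x = 0" using assms(2) by (simp add: complex_eq_iff)
  have re0: "Re (sesq A y x) = 0" for y
  proof -
    have "\<forall>t. 0 \<le> 2*t*Re (sesq A y x) + t^2*Re (qform A y)"
    proof
      fix t :: real
      have "0 \<le> Re (qform A (x + complex_of_real t *s y))" using assms(1) psd_def by blast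
      also have "qform A (x + complex_of_real t *s y) = complex_of_real t * (sesq A y x + cnj (sesq A y x)) + complex_of_real (t^2) * qform A y"
        by (simp add: qform_expand q0 sym[of y] algebra_simps power2_eq_square)
      finally show "0 \<le> 2*t*Re (sesq A y x) + t^2*Re (qform A y)" by simp
    qed
    then show ?thesis using quad_zero assms(1) psd_def by blast
  qed
  show ?thesis
  proof (rule vec_eq_iff[THEN iffD2], rule allI)
    fix k
    have "Re ((A *v x) $ k) = 0" using re0[of "axis k 1"] by (simp add: sesq_axis)
    moreover have "Im ((A *v x) $ k) = 0" using re0[of "axis k \<i>"] by (simp add: sesq_axis)
    ultimately show "(A *v x) $ k = 0 $ k" by (simp add: complex_eq_iff)
  qed
qed

lemma psd_inv_pos_def: assumes "psd A" "invertible A" shows "pos_def A"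
  unfolding pos_def_def
proof (intro conjI allI impI)
  show "A = adj A" using assms psd_def by blast
  fix x :: "complex^'a" assume "x \<noteq> 0"
  show "Im (qform A x) = 0" using assms psd_def by blast
  have "Re (qform A x) \<noteq> 0"
    using psd_kernel[OF assms(1)] assms(2) invertible_ker \<open>x \<noteq> 0\<close> by blast
  moreover have "Re (qform A x) \<ge> 0" using assms(1) unfolding psd_def by blast
  ultimately show "Re (qform A x) > 0" by linarith
qed

lemma pos_def_inv: assumes "pos_def A" shows "invertible A"
proof -
  have "x = 0" if "A *v x = 0" for x
  proof (rule ccontr)
    assume "x \<noteq> 0"
    then have "Re (qform A x) > 0" using assms pos_def_def by blast
    moreover have "qform A x = 0" using that by (simp add: qform_def)
    ultimately show False by simp
  qed
  then show ?thesis using invertible_ker by blast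
qed

lemma qform_zero[simp]: "qform A 0 = 0" by (simp add: qform_def)

lemma pos_def_psd: "pos_def A \<Longrightarrow> psd A"
  unfolding pos_def_def psd_def by (metis less_eq_real_def qform_zero zero_complex.simps)

lemma scale_real: "complex_of_real r *s x = r *\<^sub>R (x::complex^'n)"
proof (rule vec_eq_iff[THEN iffD2], rule allI)
  fix i show "(complex_of_real r *s x) $ i = (r *\<^sub>R x) $ i"
    by (simp only: vector_smult_component vector_scaleR_component) (simp add: scaleR_conv_of_real)
qed

lemma qform_scale: "qform A (c *s x) = cnj c * c * qform A x"
  by (simp add: qform_sesq sesq_scale_left sesq_scale_right)

lemma cont_qform: fixes A :: "complex^'n^'n" shows "continuous_on S (\<lambda>x. Re (qform A x))"
proof -
  have c: "continuous_on S (\<lambda>x::complex^'n. x $ i)" for i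
    by (simp add: linear_continuous_on bounded_linear_vec_nth)
  show ?thesis unfolding qform_sesq sesq_def
    by (intro continuous_intros c)
qed

lemma qform_lower: "\<exists>m. \<forall>x. m * (norm x)^2 \<le> Re (qform A (x::complex^'n))"
  and qform_lower_pd: "pos_def A \<Longrightarrow> \<exists>m>0. \<forall>x. m * (norm x)^2 \<le> Re (qform A (x::complex^'n))"
proof -
  let ?S = "sphere (0::complex^'n) 1"
  have ne: "?S \<noteq> {}" by (simp add: sphere_eq_empty)
  obtain u where u: "u \<in> ?S" "\<And>y. y \<in> ?S \<Longrightarrow> Re (qform A u) \<le> Re (qform A y)"
    using continuous_attains_inf[OF compact_sphere ne cont_qform] by blast
  have key: "Re (qform A u) * (norm x)^2 \<le> Re (qform A x)" for x
  proof (cases "x = 0")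
    case True then show ?thesis by simp
  next
    case False
    define y where "y = complex_of_real (1 / norm x) *s x"
    have y1: "y \<in> ?S" using False unfolding y_def scale_real by simp
    have xy: "x = complex_of_real (norm x) *s y" using False
      by (simp add: y_def vec_eq_iff)
    have "qform A x = complex_of_real ((norm x)^2) * qform A y"
      by (subst xy) (simp add: qform_scale power2_eq_square)
    then have "Re (qform A x) = (norm x)^2 * Re (qform A y)" by simp
    then show ?thesis using mult_right_mono[OF u(2)[OF y1], of "(norm x)^2"] by (simp add: mult.commute)
  qed
  then show "\<exists>m. \<forall>x. m * (norm x)^2 \<le> Re (qform A (x::complex^'n))" by blast
  assume pd: "pos_def A"
  have "u \<noteq> 0" using u(1) by auto
  then have "Re (qform A u) > 0" using pd pos_def_def by blast
  then show "\<exists>m>0. \<forall>x. m * (norm x)^2 \<le> Re (qform A (x::complex^'n))" using key by blast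
qed

lemma adj_add: "adj (A + B) = adj A + adj B" by (simp add: adj_def vec_eq_iff)
lemma adj_cscale: "adj (cscale c A) = cscale (cnj c) (adj A)" by (simp add: adj_def cscale_def vec_eq_iff)
lemma adj_one: "adj (mat 1 :: complex^'n^'n) = mat 1" by (simp add: adj_def mat_def vec_eq_iff)
lemma cnj_real: "cnj (complex_of_real r) = complex_of_real r" by simp

lemma qform_one: "qform (mat 1) x = complex_of_real ((norm x)^2)"
proof -
  have "qform (mat 1) x = (\<Sum>i\<in>UNIV. cnj (x$i) * x$i)" by (simp add: qform_def)
  also have "\<dots> = (\<Sum>i\<in>UNIV. complex_of_real ((norm (x$i))^2))"
    by (rule sum.cong) (simp_all only: complex_norm_square mult.commute)
  also have "\<dots> = complex_of_real ((norm x)^2)"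
    by (simp add: norm_vec_def L2_set_def sum_nonneg)
  finally show ?thesis .
qed

lemma trace_cscale: "trace (cscale c A) = c * trace A"
  by (simp add: trace_def cscale_def sum_distrib_left)

lemma qform_axis: "qform A (axis i 1) = A $ i $ i"
proof -
  have "qform A (axis i 1) = (A *v axis i 1) $ i" by (simp add: qform_sesq sesq_axis)
  also have "\<dots> = A $ i $ i"
    by (simp add: matrix_vector_mult_def axis_def if_distrib cong: if_cong)
  finally show ?thesis .
qed

lemma pos_def_trace: fixes A :: "complex^'n^'n" assumes "pos_def A"
  shows "trace A = complex_of_real (Re (trace A))" "Re (trace A) > 0"
proof -
  have t: "trace A = (\<Sum>i\<in>UNIV. qform A (axis i 1))" by (simp add: trace_def qform_axis)
  have ne: "axis i (1::complex) \<noteq> 0" for i :: 'n by (simp add: axis_eq_0_iff)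
  have "\<forall>i\<in>UNIV. Im (qform A (axis i 1)) = 0" using assms ne unfolding pos_def_def by blast
  then have "Im (trace A) = 0" unfolding t Im_sum by (simp add: sum.neutral)
  then show "trace A = complex_of_real (Re (trace A))" by (simp add: complex_eq_iff)
  have "Re (trace A) = (\<Sum>i\<in>UNIV. Re (qform A (axis i 1)))" unfolding t Re_sum ..
  also have "\<dots> > 0"
  proof (rule sum_pos)
    show "Re (qform A (axis i 1)) > 0" if "i \<in> UNIV" for i using assms ne[of i] unfolding pos_def_def by blast
  qed auto
  finally show "Re (trace A) > 0" .
qed

lemma pos_def_scale: assumes "pos_def A" "r > 0" shows "pos_def (cscale (complex_of_real r) A)"
  using assms unfolding pos_def_def by (simp add: adj_cscale qform_cscale)

theorem mainTheorem10:
  fixes \<Psi> :: "complex^'n^'n \<Rightarrow> complex^'m^'m"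
  assumes "complex_linear_map \<Psi>"
    and "hermitian_preserving \<Psi>"
    and "trace_preserving \<Psi>"
  shows "semi_positive \<Psi> \<longleftrightarrow> (\<exists>\<rho>. psd \<rho> \<and> pos_def (\<Psi> \<rho>))"
proof
  assume "semi_positive \<Psi>"
  then obtain \<rho> where h: "density_matrix \<rho> \<and> invertible \<rho> \<and>
       density_matrix (\<Psi> \<rho>) \<and> invertible (\<Psi> \<rho>)"
    unfolding semi_positive_def ..
  have d1: "density_matrix \<rho>" using h by (rule conjunct1)
  have d2: "density_matrix (\<Psi> \<rho>)" using h by (elim conjE)
  have i2: "invertible (\<Psi> \<rho>)" using h by (elim conjE)
  have "psd \<rho>" using d1 unfolding density_matrix_def by simp
  moreover have "pos_def (\<Psi> \<rho>)" 
    using d2 i2 unfolding density_matrix_def by (simp add: psd_inv_pos_def)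
  ultimately show "\<exists>\<rho>. psd \<rho> \<and> pos_def (\<Psi> \<rho>)" by (intro exI conjI)
next
  assume "\<exists>\<rho>. psd \<rho> \<and> pos_def (\<Psi> \<rho>)"
  then obtain \<rho> where r: "psd \<rho>" and P: "pos_def (\<Psi> \<rho>)" by blast
  have add: "\<Psi> (A + B) = \<Psi> A + \<Psi> B" and sc: "\<Psi> (cscale c A) = cscale c (\<Psi> A)" for A B c
    using assms(1) complex_linear_map_def by blast+
  obtain l where l: "l > 0" "\<And>x. l * (norm x)^2 \<le> Re (qform (\<Psi> \<rho>) x)"
    using qform_lower_pd[OF P] by blast
  obtain m where m: "\<And>x. m * (norm x)^2 \<le> Re (qform (\<Psi> (mat 1)) x)"
    using qform_lower by blast
  define t where "t = l / (2 * \<bar>m\<bar> + 1)"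
  have t0: "t > 0" unfolding t_def using l by simp
  have tm: "t * \<bar>m\<bar> \<le> l / 2"
  proof -
    have d: "2 * \<bar>m\<bar> + 1 > 0" by simp
    have "t * \<bar>m\<bar> * (2 * \<bar>m\<bar> + 1) = l * \<bar>m\<bar>" using t_def d by simp
    moreover have "l * \<bar>m\<bar> \<le> l / 2 * (2 * \<bar>m\<bar> + 1)" using l(1) by (simp add: algebra_simps)
    ultimately have "t * \<bar>m\<bar> * (2 * \<bar>m\<bar> + 1) \<le> l / 2 * (2 * \<bar>m\<bar> + 1)" by linarith
    then show ?thesis using d by simp
  qed
  define \<rho>1 where "\<rho>1 = \<rho> + cscale (complex_of_real t) (mat 1)"
  have Hr: "\<rho> = adj \<rho>" using r psd_def by blast
  have HP: "\<Psi> \<rho> = adj (\<Psi> \<rho>)" using P pos_def_def by blast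
  have HI: "\<Psi> (mat 1) = adj (\<Psi> (mat 1))"
    using assms(2) unfolding hermitian_preserving_def by (metis adj_one)
  have pd1: "pos_def \<rho>1"
    unfolding pos_def_def
  proof (intro conjI allI impI)
    show "\<rho>1 = adj \<rho>1" unfolding \<rho>1_def adj_add adj_cscale adj_one cnj_real using Hr by simp
    fix x :: "complex^'n" assume "x \<noteq> 0"
    have q: "qform \<rho>1 x = qform \<rho> x + complex_of_real (t * (norm x)^2)"
      unfolding \<rho>1_def qform_add qform_cscale qform_one by simp
    have "Im (qform \<rho> x) = 0" using r unfolding psd_def by blast
    then show "Im (qform \<rho>1 x) = 0" using q by simp
    have "Re (qform \<rho> x) \<ge> 0" using r psd_def by blast
    moreover have "t * (norm x)^2 > 0" using t0 \<open>x \<noteq> 0\<close> by simp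
    ultimately show "Re (qform \<rho>1 x) > 0" using q by simp
  qed
  have E1: "\<Psi> \<rho>1 = \<Psi> \<rho> + cscale (complex_of_real t) (\<Psi> (mat 1))"
    unfolding \<rho>1_def add sc ..
  have pd2: "pos_def (\<Psi> \<rho>1)"
    unfolding pos_def_def
  proof (intro conjI allI impI)
    show "\<Psi> \<rho>1 = adj (\<Psi> \<rho>1)" unfolding E1 adj_add adj_cscale cnj_real using HP HI by simp
    fix x :: "complex^'m" assume "x \<noteq> 0"
    have q: "qform (\<Psi> \<rho>1) x = qform (\<Psi> \<rho>) x + complex_of_real t * qform (\<Psi> (mat 1)) x"
      unfolding E1 qform_add qform_cscale by simp
    show "Im (qform (\<Psi> \<rho>1) x) = 0" using q herm_im[OF HP] herm_im[OF HI] by simp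
    have "Re (qform (\<Psi> \<rho>1) x) = Re (qform (\<Psi> \<rho>) x) + t * Re (qform (\<Psi> (mat 1)) x)"
      using q by simp
    moreover have "t * Re (qform (\<Psi> (mat 1)) x) \<ge> t * (m * (norm x)^2)"
      using m[of x] t0 by simp
    moreover have "t * m \<ge> - (l/2)"
    proof -
      have "t * (- \<bar>m\<bar>) \<le> t * m" using t0 by (intro mult_left_mono) auto
      then show ?thesis using tm by simp
    qed
    moreover have n0: "(norm x)^2 > 0" using \<open>x \<noteq> 0\<close> by simp
    moreover have "t * (m * (norm x)^2) \<ge> - (l/2) * (norm x)^2"
      using mult_right_mono[OF calculation(3), of "(norm x)^2"] n0 by (simp add: mult.assoc)
    moreover have "(l/2) * (norm x)^2 > 0" using l(1) n0 by simp
    ultimately show "Re (qform (\<Psi> \<rho>1) x) > 0"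
      using l(2)[of x] by (simp add: algebra_simps)
  qed
  define s where "s = 1 / Re (trace \<rho>1)"
  have s0: "s > 0" unfolding s_def using pos_def_trace(2)[OF pd1] by simp
  define \<rho>2 where "\<rho>2 = cscale (complex_of_real s) \<rho>1"
  have pd3: "pos_def \<rho>2" unfolding \<rho>2_def using pos_def_scale pd1 s0 by blast
  have E2: "\<Psi> \<rho>2 = cscale (complex_of_real s) (\<Psi> \<rho>1)" unfolding \<rho>2_def sc ..
  have pd4: "pos_def (\<Psi> \<rho>2)" unfolding E2 using pos_def_scale pd2 s0 by blast
  have tr: "trace \<rho>2 = 1"
    unfolding \<rho>2_def trace_cscale s_def
  proof -
    have aux: "\<And>c r. c = complex_of_real r \<Longrightarrow> r \<noteq> 0 \<Longrightarrow> complex_of_real (1 / r) * c = 1"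
      by (simp add: of_real_divide)
    have "trace \<rho>1 = complex_of_real (Re (trace \<rho>1))" "Re (trace \<rho>1) \<noteq> 0"
      using pos_def_trace[OF pd1] by auto
    then show "complex_of_real (1 / Re (trace \<rho>1)) * trace \<rho>1 = 1"
      by (rule aux)
  qed
  have tr2: "trace (\<Psi> \<rho>2) = 1" using assms(3) tr unfolding trace_preserving_def by simp
  show "semi_positive \<Psi>"
    unfolding semi_positive_def density_matrix_def
  proof (intro exI[of _ \<rho>2] conjI)
    show "psd \<rho>2" by (rule pos_def_psd[OF pd3])
    show "psd (\<Psi> \<rho>2)" by (rule pos_def_psd[OF pd4])
    show "invertible \<rho>2" by (rule pos_def_inv[OF pd3])
    show "invertible (\<Psi> \<rho>2)" by (rule pos_def_inv[OF pd4])
  qed (use tr tr2 in simp_all)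
qed

end
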